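(* Fix $n\ge 1$, the shape $\lambda=n^2=(n,n)$, and a density $\rho$ with positive entries $\rho_{1,j}=a_j$, $\rho_{2,j}=b_j$ for $1\le j\le n$; let $a=\sum_j a_j$, $b=\sum_j b_j$. Let $P_{\max}=E^{a_1}N^{b_1}E^{a_2}N^{b_2}\cdots E^{a_n}N^{b_n}\in\mathcal{P}$ and $I=\{P\in\mathcal{P}: P\le P_{\max}\}$. Then $\psi_\rho$ is injective with image exactly $I$; in particular $\psi_\rho$ is a bijection between $\mathrm{SVT}(\lambda,\rho)$ and $I$.
   Context: A density on a shape $\lambda$ is an assignment of a nonnegative integer $\rho_{i,j}$ to every cell $(i,j)$ (row $i$, column $j$); let $N=\sum\rho_{i,j}$. A standard set-valued Young tableau of shape $\lambda$ and density $\rho$ assigns to each cell $(i,j)$ a set $S_{i,j}$ with $|S_{i,j}|=\rho_{i,j}$, the sets partitioning $[N]$, such that every element of $S_{i,j}$ is smaller than every element of $S_{i,j+1}$ and of $S_{i+1,j}$ whenever those cells exist. $\mathrm{SVT}(\lambda,\rho)$ is the set of these tableaux. $\mathcal{P}$ is the set of lattice paths from $(0,0)$ to $(a,b)$ using steps $E=(1,0)$ and $N=(0,1)$, written as words in $E,N$. The map $\psi_\rho:\mathrm{SVT}(\lambda,\rho)\to\mathcal{P}$ sends $T$ to the word whose $m$-th letter ($1\le m\le a+b$) is $E$ if $m$ lies in the first row of $T$ and $N$ if $m$ lies in the second row. For $P_1,P_2\in\mathcal{P}$, $P_1\ge P_2$ (equivalently $P_2\le P_1$) means $P_1$ lies weakly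 above $P_2$ over $0\le x\le a$. *)

theory Defs
  imports Main
begin

datatype step = E | N

text \<open>A shape is given by its list of row lengths; cells are (row, column), 1-based.\<close>
definition cells :: "nat list \<Rightarrow> (nat \<times> nat) set" where
  "cells lam = {(i, j). 1 \<le> i \<and> i \<le> length lam \<and> 1 \<le> j \<and> j \<le> lam ! (i - 1)}"

definition density_total :: "nat list \<Rightarrow> (nat \<times> nat \<Rightarrow> nat) \<Rightarrow> nat" where
  "density_total lam rho = (\<Sum>c\<in>cells lam. rho c)"

definition SVT :: "nat list \<Rightarrow> (nat \<times> nat \<Rightarrow> nat) \<Rightarrow> (nat \<times> nat \<Rightarrow> nat set) set" where
  "SVT lam rho = {T.
     (\<forall>c. c \<notin> cells lam \<longrightarrow> T c = {}) \<and>
     (\<forall>c\<in>cells lam. finite (T c) \<and> card (T c) = rho c) \<and>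
     (\<forall>c\<in>cells lam. \<forall>d\<in>cells lam. c \<noteq> d \<longrightarrow> T c \<inter> T d = {}) \<and>
     (\<Union>c\<in>cells lam. T c) = {1..density_total lam rho} \<and>
     (\<forall>i j. (i, j) \<in> cells lam \<longrightarrow>
        ((i, j + 1) \<in> cells lam \<longrightarrow> (\<forall>x\<in>T (i, j). \<forall>y\<in>T (i, j + 1). x < y)) \<and>
        ((i + 1, j) \<in> cells lam \<longrightarrow> (\<forall>x\<in>T (i, j). \<forall>y\<in>T (i + 1, j). x < y)))}"

definition paths :: "nat \<Rightarrow> nat \<Rightarrow> step list set" where
  "paths a b = {w. length w = a + b \<and> count_list w E = a \<and> count_list w N = b}"

definition point :: "step list \<Rightarrow> nat \<Rightarrow> nat \<times> nat" where
  "point w k = (count_list (take k w) E, count_list (take k w) N)"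

definition path_points :: "step list \<Rightarrow> (nat \<times> nat) set" where
  "path_points w = {point w k | k. k \<le> length w}"

text \<open>P1 lies weakly above P2: above every point of P2 there is a point of P1
  in the same column (for monotone lattice paths this is weakly-above over [0,a]).\<close>
definition path_ge :: "step list \<Rightarrow> step list \<Rightarrow> bool" where
  "path_ge P1 P2 \<longleftrightarrow> (\<forall>(x, y)\<in>path_points P2. \<exists>y'. y \<le> y' \<and> (x, y') \<in> path_points P1)"

definition psi :: "nat \<Rightarrow> (nat \<times> nat \<Rightarrow> nat set) \<Rightarrow> step list" where
  "psi L T = map (\<lambda>m. if (\<exists>j. m \<in> T (1, j)) then E else N) [1..<L + 1]"

definition two_row_density :: "(nat \<Rightarrow> nat) \<Rightarrow> (nat \<Rightarrow> nat) \<Rightarrow> nat \<times> nat \<Rightarrow> nat" where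
  "two_row_density av bv = (\<lambda>(i, j). if i = 1 then av j else if i = 2 then bv j else 0)"

definition P_max :: "nat \<Rightarrow> (nat \<Rightarrow> nat) \<Rightarrow> (nat \<Rightarrow> nat) \<Rightarrow> step list" where
  "P_max n av bv = concat (map (\<lambda>j. replicate (av j) E @ replicate (bv j) N) [1..<n + 1])"

end

theory Submission
  imports Defs
begin


definition rk :: "step list \<Rightarrow> step \<Rightarrow> nat \<Rightarrow> nat" where
  "rk w s m = count_list (take m w) s"
definition pos :: "step list \<Rightarrow> step \<Rightarrow> nat set" where
  "pos w s = {m. 1 \<le> m \<and> m \<le> length w \<and> w!(m-1) = s}"
definition As :: "(nat \<Rightarrow> nat) \<Rightarrow> nat \<Rightarrow> nat" where
  "As f j = (\<Sum>i=1..j. f i)"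

lemma As_0[simp]: "As f 0 = 0" by (simp add: As_def)
lemma As_Suc[simp]: "As f (Suc j) = As f j + f (Suc j)"
  by (simp add: As_def)
lemma As_mono: "i \<le> j \<Longrightarrow> As f i \<le> As f j"
  by (induction j) (auto simp: le_Suc_eq)
lemma As_pred: "j \<ge> 1 \<Longrightarrow> As f j = As f (j-1) + f j"
  by (cases j) auto

lemma count_take_le: "count_list (take k xs) s \<le> count_list xs s"
proof -
  have "count_list xs s = count_list (take k xs) s + count_list (drop k xs) s"
    by (metis append_take_drop_id count_list_append)
  then show ?thesis by simp
qed

lemma rk_mono: "m \<le> m' \<Longrightarrow> rk w s m \<le> rk w s m'"
proof -
  assume "m \<le> m'"
  then have "take m w = take m (take m' w)" by (simp add: min_def)
  then show ?thesis unfolding rk_def by (metis count_take_le)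
qed

lemma rk_le_count: "rk w s m \<le> count_list w s"
  unfolding rk_def by (rule count_take_le)

lemma rk_len: "rk w s (length w) = count_list w s"
  by (simp add: rk_def)

lemma rk_step: "m \<in> pos w s \<Longrightarrow> rk w s m = rk w s (m-1) + 1"
proof -
  assume "m \<in> pos w s"
  then have m: "1 \<le> m" "m \<le> length w" "w!(m-1) = s" by (auto simp: pos_def)
  then have "m - 1 < length w" "Suc (m-1) = m" by auto
  then have "take m w = take (m-1) w @ [w!(m-1)]"
    using take_Suc_conv_app_nth[of "m-1" w] by simp
  then show ?thesis using m by (simp add: rk_def)
qed

lemma rk_strict: "m \<in> pos w s \<Longrightarrow> m' < m \<Longrightarrow> rk w s m' < rk w s m"
proof -
  assume a: "m \<in> pos w s" "m' < m"
  then have "m' \<le> m - 1" by simp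
  then have "rk w s m' \<le> rk w s (m-1)" by (rule rk_mono)
  then show ?thesis using rk_step[OF a(1)] by simp
qed

lemma rk_Suc: "rk w s (Suc k) = rk w s k + (if k < length w \<and> w!k = s then 1 else 0)"
proof (cases "k < length w")
  case True
  then have "take (Suc k) w = take k w @ [w!k]" by (simp add: take_Suc_conv_app_nth)
  then show ?thesis using True by (simp add: rk_def)
next
  case False then show ?thesis by (simp add: rk_def)
qed

lemma rk_surj: "1 \<le> r \<Longrightarrow> r \<le> rk w s k \<Longrightarrow> \<exists>p\<in>pos w s. p \<le> k \<and> rk w s p = r"
proof (induction k)
  case 0 then show ?case by (simp add: rk_def)
next
  case (Suc k)
  show ?case
  proof (cases "r \<le> rk w s k")
    case True
    then obtain p where "p\<in>pos w s" "p \<le> k" "rk w s p = r" using Suc.IH Suc.prems(1) by blast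
    then show ?thesis by (intro bexI[of _ p]) auto
  next
    case False
    then have "k < length w \<and> w!k = s" "r = rk w s (Suc k)" using Suc.prems rk_Suc[of w s k]
      by (auto split: if_splits)
    then show ?thesis by (intro bexI[of _ "Suc k"]) (auto simp: pos_def)
  qed
qed

lemma rk_card: "k \<le> length w \<Longrightarrow> rk w s k = card {p \<in> pos w s. p \<le> k}"
proof (induction k)
  case 0 then show ?case by (simp add: rk_def pos_def)
next
  case (Suc k)
  show ?case
  proof (cases "w!k = s")
    case True
    then have "{p \<in> pos w s. p \<le> Suc k} = insert (Suc k) {p \<in> pos w s. p \<le> k}"
      using Suc.prems by (auto simp: pos_def)
    moreover have "finite {p \<in> pos w s. p \<le> k}" by simp
    ultimately show ?thesis using Suc True rk_Suc[of w s k] by simp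
  next
    case False
    then have "{p \<in> pos w s. p \<le> Suc k} = {p \<in> pos w s. p \<le> k}"
      by (auto simp: pos_def le_Suc_eq)
    then show ?thesis using Suc False rk_Suc[of w s k] by simp
  qed
qed

lemma count_EN: "count_list w E + count_list w N = length w"
proof (induction w)
  case (Cons x w) then show ?case by (cases x) auto
qed simp

definition tabrow :: "step list \<Rightarrow> step \<Rightarrow> (nat \<Rightarrow> nat) \<Rightarrow> nat \<Rightarrow> nat set" where
  "tabrow w s c j = {m\<in>pos w s. As c (j-1) < rk w s m \<and> rk w s m \<le> As c j}"

lemma finite_pos[simp]: "finite (pos w s)"
  by (rule finite_subset[of _ "{..length w}"]) (auto simp: pos_def)

lemma card_tabrow:
  assumes "j \<ge> 1" "As c j \<le> count_list w s"
  shows "card (tabrow w s c j) = c j"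
proof -
  have inj: "inj_on (rk w s) (tabrow w s c j)"
    unfolding inj_on_def tabrow_def
    by (metis (no_types, lifting) mem_Collect_eq nat_neq_iff rk_strict)
  have img: "rk w s ` tabrow w s c j = {As c (j-1)<..As c j}"
  proof
    show "rk w s ` tabrow w s c j \<subseteq> {As c (j-1)<..As c j}" by (auto simp: tabrow_def)
    show "{As c (j-1)<..As c j} \<subseteq> rk w s ` tabrow w s c j"
    proof
      fix r assume r: "r \<in> {As c (j-1)<..As c j}"
      then have "1 \<le> r" "r \<le> rk w s (length w)" using assms rk_len[of w s] by auto
      then obtain p where "p \<in> pos w s" "rk w s p = r" using rk_surj by blast
      then show "r \<in> rk w s ` tabrow w s c j" using r by (auto simp: tabrow_def)
    qed
  qed
  have "card (tabrow w s c j) = card {As c (j-1)<..As c j}"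
    using card_image[OF inj] img by simp
  also have "\<dots> = c j" using As_pred[OF assms(1), of c] by simp
  finally show ?thesis .
qed

lemma tabrow_disj:
  assumes "j \<noteq> j'" "j \<ge> 1" "j' \<ge> 1"
  shows "tabrow w s c j \<inter> tabrow w s c j' = {}"
proof -
  { fix j j' r assume "j < j'" "As c (j-1) < r" "r \<le> As c j" "As c (j'-1) < r" "r \<le> As c j'"
    then have "j \<le> j'-1" by simp
    then have "As c j \<le> As c (j'-1)" by (rule As_mono)
    then have False using \<open>As c (j'-1) < r\<close> \<open>r \<le> As c j\<close> by linarith }
  then show ?thesis using assms unfolding tabrow_def
    by (auto, metis nat_neq_iff)
qed

lemma tabrow_row:
  assumes "x \<in> tabrow w s c j" "y \<in> tabrow w s c (Suc j)"
  shows "x < y"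
proof (rule ccontr)
  assume "\<not> x < y"
  then have "rk w s y \<le> rk w s x" by (simp add: rk_mono)
  then show False using assms by (auto simp: tabrow_def)
qed

lemma find_block: "0 < r \<Longrightarrow> r \<le> As c n \<Longrightarrow> \<exists>j\<in>{1..n}. As c (j-1) < r \<and> r \<le> As c j"
proof (induction n)
  case 0 then show ?case by simp
next
  case (Suc n)
  show ?case
  proof (cases "r \<le> As c n")
    case True then show ?thesis using Suc by force
  next
    case False then show ?thesis using Suc.prems by (intro bexI[of _ "Suc n"]) auto
  qed
qed

lemma find_col: "x \<le> As c n \<Longrightarrow> \<exists>j\<le>n. As c j \<le> x \<and> (j < n \<longrightarrow> x < As c (Suc j))"
proof (induction n)
  case 0 then show ?case by simp
next
  case (Suc n)
  show ?case
  proof (cases "As c (Suc n) \<le> x")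
    case True then show ?thesis by auto
  next
    case F: False
    show ?thesis
    proof (cases "x \<le> As c n")
      case True
      then obtain j where "j \<le> n" "As c j \<le> x" "j < n \<longrightarrow> x < As c (Suc j)" using Suc by blast
      then show ?thesis using F by (intro exI[of _ j]) (auto simp: less_Suc_eq)
    next
      case False then show ?thesis using F by (intro exI[of _ n]) auto
    qed
  qed
qed



definition blk :: "(nat \<Rightarrow> nat) \<Rightarrow> (nat \<Rightarrow> nat) \<Rightarrow> nat \<Rightarrow> step list" where
  "blk av bv j = replicate (av j) E @ replicate (bv j) N"
definition Cb :: "(nat \<Rightarrow> nat) \<Rightarrow> (nat \<Rightarrow> nat) \<Rightarrow> nat \<Rightarrow> step list" where
  "Cb av bv m = concat (map (blk av bv) [1..<m+1])"

lemma P_max_Cb: "P_max n av bv = Cb av bv n"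
  unfolding P_max_def Cb_def blk_def[abs_def] ..

lemma count_rep[simp]: "count_list (replicate k x) y = (if x = y then k else 0)"
  by (induction k) auto

lemma Cb_0[simp]: "Cb av bv 0 = []" by (simp add: Cb_def)
lemma Cb_Suc: "Cb av bv (Suc m) = Cb av bv m @ blk av bv (Suc m)"
  by (simp add: Cb_def)

lemma Cb_count: "count_list (Cb av bv m) E = As av m \<and> count_list (Cb av bv m) N = As bv m"
  by (induction m) (auto simp: Cb_Suc blk_def)

lemma Cb_len: "length (Cb av bv m) = As av m + As bv m"
  by (induction m) (auto simp: Cb_Suc blk_def)

lemma Cb_prefix: "j \<le> n \<Longrightarrow> \<exists>rest. Cb av bv n = Cb av bv j @ rest"
proof (induction n)
  case 0 then show ?case by simp
next
  case (Suc n)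
  show ?case
  proof (cases "j = Suc n")
    case True then show ?thesis by simp
  next
    case False
    then obtain rest where "Cb av bv n = Cb av bv j @ rest" using Suc by fastforce
    then show ?thesis by (simp add: Cb_Suc)
  qed
qed

lemma Cb_prefix2: "j < n \<Longrightarrow> \<exists>rest. Cb av bv n = Cb av bv j @ replicate (av (Suc j)) E @ replicate (bv (Suc j)) N @ rest"
proof -
  assume "j < n"
  then obtain rest where "Cb av bv n = Cb av bv (Suc j) @ rest" using Cb_prefix[of "Suc j" n] by auto
  then show ?thesis by (simp add: Cb_Suc blk_def)
qed

lemma PM_lemma:
  assumes "1 \<le> j" "j \<le> n" "count_list (take k (Cb av bv n)) N > As bv (j-1)"
  shows "count_list (take k (Cb av bv n)) E \<ge> As av j"
proof -
  obtain rest where r: "Cb av bv n = Cb av bv (j-1) @ replicate (av j) E @ replicate (bv j) N @ rest"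
  proof -
    have "j - 1 < n" "Suc (j-1) = j" using assms by auto
    then show ?thesis using Cb_prefix2[of "j-1" n av bv] that by metis
  qed
  define Q where "Q = Cb av bv (j-1) @ replicate (av j) E"
  have CQ: "Cb av bv n = Q @ (replicate (bv j) N @ rest)" using r by (simp add: Q_def)
  have QN: "count_list Q N = As bv (j-1)" using Cb_count[of av bv "j-1"] by (simp add: Q_def)
  have QE: "count_list Q E = As av j" using Cb_count[of av bv "j-1"] As_pred[OF assms(1), of av]
    by (simp add: Q_def)
  show ?thesis
  proof (cases "k \<le> length Q")
    case True
    then have "take k (Cb av bv n) = take k Q" using CQ by simp
    then have "count_list (take k (Cb av bv n)) N \<le> As bv (j-1)" using QN count_take_le[of k Q N] by simp
    then show ?thesis using assms(3) by simp
  next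
    case False
    then have "take k (Cb av bv n) = Q @ take (k - length Q) (replicate (bv j) N @ rest)" using CQ by simp
    then show ?thesis using QE by simp
  qed
qed

lemma point_lemma:
  assumes "j \<le> n" "As av j \<le> x" "j < n \<longrightarrow> x < As av (Suc j)" "x \<le> As av n"
  shows "point (Cb av bv n) (x + As bv j) = (x, As bv j)"
proof (cases "j < n")
  case True
  then obtain rest where r: "Cb av bv n = Cb av bv j @ replicate (av (Suc j)) E @ replicate (bv (Suc j)) N @ rest"
    using Cb_prefix2 by blast
  have d: "x - As av j < av (Suc j)" using assms True by simp
  have "take (x + As bv j) (Cb av bv n) = Cb av bv j @ replicate (x - As av j) E"
    using r d assms(2) by (simp add: Cb_len)
  then show ?thesis using Cb_count[of av bv j] assms(2) by (simp add: point_def)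
next
  case False
  then have "j = n" "x = As av n" using assms by auto
  then show ?thesis using Cb_count[of av bv n] Cb_len[of av bv n] by (simp add: point_def)
qed



lemma cells_nn: "cells [n, n] = {1,2} \<times> {1..n}"
  unfolding cells_def by (auto simp: nth_Cons' le_Suc_eq)

lemma density_nn: "density_total [n, n] (two_row_density av bv) = As av n + As bv n"
proof -
  have "density_total [n, n] (two_row_density av bv) = (\<Sum>i\<in>{1,2::nat}. \<Sum>j\<in>{1..n}. two_row_density av bv (i, j))"
    unfolding density_total_def cells_nn by (simp add: sum.cartesian_product)
  also have "\<dots> = As av n + As bv n" by (simp add: two_row_density_def As_def)
  finally show ?thesis .
qed

lemma chain_lt:
  assumes ne: "\<forall>j\<in>{1..n}. S j \<noteq> {}"
    and adj: "\<forall>j. 1 \<le> j \<longrightarrow> Suc j \<le> n \<longrightarrow> (\<forall>x\<in>S j. \<forall>y\<in>S (Suc j). x < (y::nat))"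
  shows "1 \<le> i \<Longrightarrow> i < j \<Longrightarrow> j \<le> n \<Longrightarrow> x \<in> S i \<Longrightarrow> y \<in> S j \<Longrightarrow> x < y"
proof (induction j arbitrary: y)
  case 0 then show ?case by simp
next
  case (Suc j)
  show ?case
  proof (cases "i = j")
    case True then show ?thesis using adj Suc.prems by auto
  next
    case False
    then have ij: "i < j" using Suc.prems by simp
    obtain z where z: "z \<in> S j" using ne ij Suc.prems by fastforce
    have "x < z" using Suc.IH[OF Suc.prems(1) ij _ Suc.prems(4) z] Suc.prems by simp
    moreover have "z < y"
    proof -
      have "1 \<le> j" using ij Suc.prems by simp
      then show ?thesis using adj Suc.prems(3,5) z by blast
    qed
    ultimately show ?thesis by simp
  qed
qed

lemma row_char:
  assumes fin: "\<forall>j\<in>{1..n}. finite (S j)"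
    and crd: "\<forall>j\<in>{1..n}. card (S j) = c j"
    and cpos: "\<forall>j\<in>{1..n}. c j > 0"
    and disj: "\<forall>i\<in>{1..n}. \<forall>j\<in>{1..n}. i \<noteq> j \<longrightarrow> S i \<inter> S j = {}"
    and adj: "\<forall>j. 1 \<le> j \<longrightarrow> Suc j \<le> n \<longrightarrow> (\<forall>x\<in>S j. \<forall>y\<in>S (Suc j). x < y)"
    and P: "pos w s = (\<Union>j\<in>{1..n}. S j)"
    and j: "j \<in> {1..n}"
  shows "S j = tabrow w s c j"
proof -
  have ne: "\<forall>j\<in>{1..n}. S j \<noteq> {}" using crd cpos by fastforce
  note ch = chain_lt[OF ne adj]
  have K: "As c (j-1) < rk w s m \<and> rk w s m \<le> As c j" if jj: "j \<in> {1..n}" and m: "m \<in> S j" for j m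
  proof -
    have mp: "m \<in> pos w s" using P jj m by blast
    then have "m \<le> length w" by (simp add: pos_def)
    then have r: "rk w s m = card {p\<in>pos w s. p \<le> m}" by (rule rk_card)
    have eq: "{p\<in>pos w s. p \<le> m} = (\<Union>i\<in>{1..j-1}. S i) \<union> {p\<in>S j. p \<le> m}"
    proof
      show "{p\<in>pos w s. p \<le> m} \<subseteq> (\<Union>i\<in>{1..j-1}. S i) \<union> {p\<in>S j. p \<le> m}"
      proof
        fix p assume "p \<in> {p\<in>pos w s. p \<le> m}"
        then obtain i where i: "i \<in> {1..n}" "p \<in> S i" "p \<le> m" using P by auto
        have "\<not> j < i" using ch[of j i m p] i jj m by auto
        then show "p \<in> (\<Union>i\<in>{1..j-1}. S i) \<union> {p\<in>S j. p \<le> m}"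
          using i by (cases "i = j") auto
      qed
      show "(\<Union>i\<in>{1..j-1}. S i) \<union> {p\<in>S j. p \<le> m} \<subseteq> {p\<in>pos w s. p \<le> m}"
      proof
        fix p assume "p \<in> (\<Union>i\<in>{1..j-1}. S i) \<union> {p\<in>S j. p \<le> m}"
        then show "p \<in> {p\<in>pos w s. p \<le> m}"
        proof
          assume "p \<in> (\<Union>i\<in>{1..j-1}. S i)"
          then obtain i where i: "i \<in> {1..j-1}" "p \<in> S i" by auto
          then have "p < m" using ch[of i j p m] jj m by auto
          moreover have "p \<in> pos w s" using P i jj by auto
          ultimately show ?thesis by simp
        next
          assume "p \<in> {p\<in>S j. p \<le> m}"
          then show ?thesis using P jj by auto
        qed
      qed
    qed
    have sub: "{1..j-1} \<subseteq> {1..n}" using jj by auto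
    have d1: "(\<Union>i\<in>{1..j-1}. S i) \<inter> {p\<in>S j. p \<le> m} = {}"
    proof -
      { fix p i assume a: "i \<in> {1..j-1}" "p \<in> S i" "p \<in> S j"
        then have "i \<in> {1..n}" "i \<noteq> j" using jj by auto
        then have False using disj jj a(2,3) by blast }
      then show ?thesis by blast
    qed
    have fin': "\<forall>i\<in>{1..j-1}. finite (S i)" using fin sub by blast
    have disj': "\<forall>i\<in>{1..j-1}. \<forall>k\<in>{1..j-1}. i \<noteq> k \<longrightarrow> S i \<inter> S k = {}" using disj sub by blast
    have f1: "finite (\<Union>i\<in>{1..j-1}. S i)" using fin' by blast
    have f2: "finite {p\<in>S j. p \<le> m}" using fin jj by auto
    have cu: "card (\<Union>i\<in>{1..j-1}. S i) = (\<Sum>i\<in>{1..j-1}. card (S i))"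
      using card_UN_disjoint[of "{1..j-1}" S] fin' disj' by simp
    also have "\<dots> = As c (j-1)" unfolding As_def using crd jj by (intro sum.cong) auto
    finally have cu: "card (\<Union>i\<in>{1..j-1}. S i) = As c (j-1)" .
    have rr: "rk w s m = As c (j-1) + card {p\<in>S j. p \<le> m}"
      using r eq card_Un_disjoint[OF f1 f2 d1] cu by simp
    have "m \<in> {p\<in>S j. p \<le> m}" using m by simp
    then have "card {p\<in>S j. p \<le> m} \<noteq> 0" using f2 by auto
    then have "card {p\<in>S j. p \<le> m} \<ge> 1" by linarith
    moreover have "card {p\<in>S j. p \<le> m} \<le> c j" using crd jj fin card_mono[of "S j" "{p\<in>S j. p \<le> m}"] by auto
    ultimately show ?thesis using rr As_pred[of j c] jj by auto
  qed
  show ?thesis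
  proof
    show "S j \<subseteq> tabrow w s c j" using K[OF j] P j unfolding tabrow_def by blast
    show "tabrow w s c j \<subseteq> S j"
    proof
      fix m assume m: "m \<in> tabrow w s c j"
      then have "m \<in> pos w s" by (simp add: tabrow_def)
      then obtain j' where j': "j' \<in> {1..n}" "m \<in> S j'" using P by auto
      then have "m \<in> tabrow w s c j'" using K[OF j'] unfolding tabrow_def using P by blast
      then have "j' = j" using tabrow_disj[of j j' w s c] m j j' by auto
      then show "m \<in> S j" using j' by simp
    qed
  qed
qed



locale svt =
  fixes n :: nat and av bv :: "nat \<Rightarrow> nat" and T :: "nat \<times> nat \<Rightarrow> nat set"
  assumes T: "T \<in> SVT [n, n] (two_row_density av bv)"
    and apos: "\<forall>j\<in>{1..n}. av j > 0" and bpos: "\<forall>j\<in>{1..n}. bv j > 0"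
begin

abbreviation "L \<equiv> As av n + As bv n"
definition "w = psi L T"

lemma Tprops:
  "\<forall>c. c \<notin> {1,2} \<times> {1..n} \<longrightarrow> T c = {}"
  "\<forall>c\<in>{1,2} \<times> {1..n}. finite (T c) \<and> card (T c) = two_row_density av bv c"
  "\<forall>c\<in>{1,2} \<times> {1..n}. \<forall>d\<in>{1,2} \<times> {1..n}. c \<noteq> d \<longrightarrow> T c \<inter> T d = {}"
  "(\<Union>c\<in>{1,2} \<times> {1..n}. T c) = {1..L}"
  "\<forall>i j. (i, j) \<in> {1,2} \<times> {1..n} \<longrightarrow>
        ((i, j + 1) \<in> {1,2} \<times> {1..n} \<longrightarrow> (\<forall>x\<in>T (i, j). \<forall>y\<in>T (i, j + 1). x < y)) \<and>
        ((i + 1, j) \<in> {1,2} \<times> {1..n} \<longrightarrow> (\<forall>x\<in>T (i, j). \<forall>y\<in>T (i + 1, j). x < y))"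
  using T unfolding SVT_def cells_nn[symmetric] density_nn[symmetric] by auto

lemma out: "i \<noteq> 1 \<and> i \<noteq> 2 \<or> j \<notin> {1..n} \<Longrightarrow> T (i, j) = {}"
  using Tprops(1) by auto

lemma fin: "finite (T (i, j))"
proof (cases "(i = 1 \<or> i = 2) \<and> j \<in> {1..n}")
  case True then show ?thesis using Tprops(2) by auto
next
  case False then show ?thesis using out by auto
qed

lemma card1: "j \<in> {1..n} \<Longrightarrow> card (T (1, j)) = av j"
  using Tprops(2) by (auto simp: two_row_density_def)
lemma card2: "j \<in> {1..n} \<Longrightarrow> card (T (2, j)) = bv j"
  using Tprops(2) by (auto simp: two_row_density_def)

lemma disj1: "i \<in> {1..n} \<Longrightarrow> j \<in> {1..n} \<Longrightarrow> i \<noteq> j \<Longrightarrow> T (1, i) \<inter> T (1, j) = {}"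
  using Tprops(3) by auto
lemma disj2: "i \<in> {1..n} \<Longrightarrow> j \<in> {1..n} \<Longrightarrow> i \<noteq> j \<Longrightarrow> T (2, i) \<inter> T (2, j) = {}"
  using Tprops(3) by auto
lemma disj12: "T (1, i) \<inter> T (2, j) = {}"
proof (cases "i \<in> {1..n} \<and> j \<in> {1..n}")
  case True then show ?thesis using Tprops(3) by auto
next
  case False then show ?thesis using out by auto
qed

lemma sub: "T (i, j) \<subseteq> {1..L}"
proof (cases "(i = 1 \<or> i = 2) \<and> j \<in> {1..n}")
  case True then show ?thesis using Tprops(4) by blast
next
  case False then show ?thesis using out by auto
qed

lemma row1: "1 \<le> j \<Longrightarrow> Suc j \<le> n \<Longrightarrow> x \<in> T (1, j) \<Longrightarrow> y \<in> T (1, Suc j) \<Longrightarrow> x < y"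
proof -
  assume a: "1 \<le> j" "Suc j \<le> n" "x \<in> T (1, j)" "y \<in> T (1, Suc j)"
  have "(1::nat, j) \<in> {1,2} \<times> {1..n}" "(1::nat, j + 1) \<in> {1,2} \<times> {1..n}" using a by auto
  then have "\<forall>x\<in>T (1, j). \<forall>y\<in>T (1, j + 1). x < y" using Tprops(5) by blast
  then show ?thesis using a by simp
qed
lemma row2: "1 \<le> j \<Longrightarrow> Suc j \<le> n \<Longrightarrow> x \<in> T (2, j) \<Longrightarrow> y \<in> T (2, Suc j) \<Longrightarrow> x < y"
proof -
  assume a: "1 \<le> j" "Suc j \<le> n" "x \<in> T (2, j)" "y \<in> T (2, Suc j)"
  have "(2::nat, j) \<in> {1,2} \<times> {1..n}" "(2::nat, j + 1) \<in> {1,2} \<times> {1..n}" using a by auto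
  then have "\<forall>x\<in>T (2, j). \<forall>y\<in>T (2, j + 1). x < y" using Tprops(5) by blast
  then show ?thesis using a by simp
qed
lemma col: "j \<in> {1..n} \<Longrightarrow> x \<in> T (1, j) \<Longrightarrow> y \<in> T (2, j) \<Longrightarrow> x < y"
proof -
  assume a: "j \<in> {1..n}" "x \<in> T (1, j)" "y \<in> T (2, j)"
  have "(1::nat, j) \<in> {1,2} \<times> {1..n}" "(1 + 1::nat, j) \<in> {1,2} \<times> {1..n}" using a by auto
  then have "\<forall>x\<in>T (1, j). \<forall>y\<in>T (1 + 1, j). x < y" using Tprops(5) by blast
  then show ?thesis using a by (simp add: numeral_2_eq_2)
qed

lemma w_len: "length w = L" unfolding w_def psi_def by (simp only: length_map length_upt) 

lemma w_nth: "1 \<le> m \<Longrightarrow> m \<le> L \<Longrightarrow> w!(m-1) = (if \<exists>j. m \<in> T (1, j) then E else N)"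
proof -
  assume m: "1 \<le> m" "m \<le> L"
  then have "[1..<L+1] ! (m-1) = 1 + (m-1)" by (intro nth_upt) simp
  then have "[1..<L+1] ! (m-1) = m" using m by simp
  moreover have "m - 1 < length [1..<L+1]" using m by (simp del: upt_Suc)
  ultimately show ?thesis unfolding w_def psi_def by (simp del: upt_Suc)
qed

lemma posE: "pos w E = (\<Union>j\<in>{1..n}. T (1, j))"
proof
  show "pos w E \<subseteq> (\<Union>j\<in>{1..n}. T (1, j))"
  proof
    fix m assume "m \<in> pos w E"
    then have m: "1 \<le> m" "m \<le> L" "w!(m-1) = E" by (auto simp: pos_def w_len)
    then obtain j where "m \<in> T (1, j)" using w_nth by (auto split: if_splits)
    moreover then have "j \<in> {1..n}" using out by fastforce
    ultimately show "m \<in> (\<Union>j\<in>{1..n}. T (1, j))" by blast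
  qed
  show "(\<Union>j\<in>{1..n}. T (1, j)) \<subseteq> pos w E"
  proof
    fix m assume "m \<in> (\<Union>j\<in>{1..n}. T (1, j))"
    then obtain j where j: "m \<in> T (1, j)" by blast
    then have "m \<in> {1..L}" using sub by blast
    then have "1 \<le> m" "m \<le> L" by auto
    then show "m \<in> pos w E" using w_nth j by (auto simp: pos_def w_len)
  qed
qed

lemma posN: "pos w N = (\<Union>j\<in>{1..n}. T (2, j))"
proof
  show "pos w N \<subseteq> (\<Union>j\<in>{1..n}. T (2, j))"
  proof
    fix m assume "m \<in> pos w N"
    then have m: "1 \<le> m" "m \<le> L" "w!(m-1) = N" by (auto simp: pos_def w_len)
    then have nE: "\<not> (\<exists>j. m \<in> T (1, j))" using w_nth by (auto split: if_splits)
    have "m \<in> (\<Union>c\<in>{1,2} \<times> {1..n}. T c)" using Tprops(4) m by auto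
    then obtain c where c: "c \<in> {1,2} \<times> {1..n}" "m \<in> T c" by blast
    obtain i j where "c = (i, j)" by fastforce
    then have "i = 1 \<or> i = 2" "j \<in> {1..n}" "m \<in> T (i, j)" using c by auto
    then show "m \<in> (\<Union>j\<in>{1..n}. T (2, j))" using nE by blast
  qed
  show "(\<Union>j\<in>{1..n}. T (2, j)) \<subseteq> pos w N"
  proof
    fix m assume "m \<in> (\<Union>j\<in>{1..n}. T (2, j))"
    then obtain j where j: "m \<in> T (2, j)" by blast
    then have "m \<in> {1..L}" using sub by blast
    then have "1 \<le> m" "m \<le> L" by auto
    moreover have "\<not> (\<exists>j. m \<in> T (1, j))" using disj12 j by blast
    ultimately show "m \<in> pos w N" using w_nth by (auto simp: pos_def w_len)
  qed
qed

lemma rowE: "j \<in> {1..n} \<Longrightarrow> T (1, j) = tabrow w E av j"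
proof -
  assume j: "j \<in> {1..n}"
  have h1: "\<forall>j\<in>{1..n}. finite (T (1, j))" using fin by blast
  have h2: "\<forall>j\<in>{1..n}. card (T (1, j)) = av j" using card1 by blast
  have h4: "\<forall>i\<in>{1..n}. \<forall>j\<in>{1..n}. i \<noteq> j \<longrightarrow> T (1, i) \<inter> T (1, j) = {}" using disj1 by blast
  have h5: "\<forall>j. 1 \<le> j \<longrightarrow> Suc j \<le> n \<longrightarrow> (\<forall>x\<in>T (1, j). \<forall>y\<in>T (1, Suc j). x < y)" using row1 by blast
  show ?thesis using row_char[of n "\<lambda>j. T (1, j)" av, OF h1 h2 apos h4 h5 posE j] .
qed

lemma rowN: "j \<in> {1..n} \<Longrightarrow> T (2, j) = tabrow w N bv j"
proof -
  assume j: "j \<in> {1..n}"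
  have h1: "\<forall>j\<in>{1..n}. finite (T (2, j))" using fin by blast
  have h2: "\<forall>j\<in>{1..n}. card (T (2, j)) = bv j" using card2 by blast
  have h4: "\<forall>i\<in>{1..n}. \<forall>j\<in>{1..n}. i \<noteq> j \<longrightarrow> T (2, i) \<inter> T (2, j) = {}" using disj2 by blast
  have h5: "\<forall>j. 1 \<le> j \<longrightarrow> Suc j \<le> n \<longrightarrow> (\<forall>x\<in>T (2, j). \<forall>y\<in>T (2, Suc j). x < y)" using row2 by blast
  show ?thesis using row_char[of n "\<lambda>j. T (2, j)" bv, OF h1 h2 bpos h4 h5 posN j] .
qed

lemma countE: "count_list w E = As av n"
proof -
  have "count_list w E = card (pos w E)"
  proof -
    have "{p\<in>pos w E. p \<le> length w} = pos w E" by (auto simp: pos_def)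
    then show ?thesis using rk_card[of "length w" w E] rk_len[of w E] by simp
  qed
  also have "\<dots> = (\<Sum>j\<in>{1..n}. card (T (1, j)))"
    unfolding posE using card_UN_disjoint[of "{1..n}" "\<lambda>j. T (1, j)"] fin disj1 by blast
  also have "\<dots> = As av n" unfolding As_def using card1 by simp
  finally show ?thesis .
qed

lemma countN: "count_list w N = As bv n"
  using countE count_EN[of w] w_len by simp

end



definition tab :: "nat \<Rightarrow> (nat\<Rightarrow>nat) \<Rightarrow> (nat\<Rightarrow>nat) \<Rightarrow> step list \<Rightarrow> nat \<times> nat \<Rightarrow> nat set" where
  "tab n av bv w c = (if fst c = 1 \<and> snd c \<in> {1..n} then tabrow w E av (snd c)
     else if fst c = 2 \<and> snd c \<in> {1..n} then tabrow w N bv (snd c) else {})"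

lemma point_rk: "point w k = (rk w E k, rk w N k)"
  by (simp add: point_def rk_def)

context svt begin

lemma tab_eq: "tab n av bv w = T"
proof
  fix c :: "nat \<times> nat"
  obtain i j where c: "c = (i, j)" by fastforce
  show "tab n av bv w c = T c"
  proof (cases "i = 1 \<and> j \<in> {1..n}")
    case True then show ?thesis using rowE c by (simp add: tab_def)
  next
    case F1: False
    show ?thesis
    proof (cases "i = 2 \<and> j \<in> {1..n}")
      case True then show ?thesis using rowN c by (simp add: tab_def)
    next
      case False then show ?thesis using F1 c out by (auto simp: tab_def)
    qed
  qed
qed

lemma w_paths: "w \<in> paths (As av n) (As bv n)"
  using w_len countE countN by (simp add: paths_def)

lemma w_ge: "path_ge (P_max n av bv) w"
  unfolding path_ge_def
proof (intro ballI, clarify)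
  fix x y assume "(x, y) \<in> path_points w"
  then obtain k where k: "k \<le> length w" "(x, y) = point w k" by (auto simp: path_points_def)
  then have xy: "x = rk w E k" "y = rk w N k" by (auto simp: point_rk)
  have xle: "x \<le> As av n" using xy rk_le_count[of w E k] countE by simp
  obtain j where j: "j \<le> n" "As av j \<le> x" "j < n \<longrightarrow> x < As av (Suc j)"
    using find_col[OF xle] by blast
  have pt: "point (Cb av bv n) (x + As bv j) = (x, As bv j)"
    by (rule point_lemma) (use j xle in auto)
  have "x + As bv j \<le> length (Cb av bv n)"
    using xle As_mono[OF j(1), of bv] Cb_len[of av bv n] by simp
  then have inpts: "(x, As bv j) \<in> path_points (P_max n av bv)"
    unfolding P_max_Cb path_points_def using pt by (metis (mono_tags, lifting) mem_Collect_eq)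
  have "y \<le> As bv j"
  proof (rule ccontr)
    assume "\<not> y \<le> As bv j"
    then have yg: "As bv j + 1 \<le> rk w N k" using xy by simp
    have "y \<le> As bv n" using xy rk_le_count[of w N k] countN by simp
    then have jn: "j < n" using yg xy j(1) by (cases "j = n") auto
    then have sj: "Suc j \<in> {1..n}" by simp
    obtain p where p: "p \<in> pos w N" "p \<le> k" "rk w N p = As bv j + 1"
      using rk_surj[OF _ yg] by auto
    have "bv (Suc j) > 0" using bpos sj by blast
    then have "p \<in> tabrow w N bv (Suc j)" using p by (simp add: tabrow_def)
    then have pT: "p \<in> T (2, Suc j)" using rowN[OF sj] by simp
    have "As av (Suc j) \<le> rk w E (length w)" using As_mono[of "Suc j" n av] jn rk_len[of w E] countE by simp
    then obtain q where q: "q \<in> pos w E" "rk w E q = As av (Suc j)"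
      using rk_surj[of "As av (Suc j)" w E "length w"] \<open>bv (Suc j) > 0\<close> apos sj by fastforce
    have "av (Suc j) > 0" using apos sj by blast
    then have "q \<in> tabrow w E av (Suc j)" using q by (simp add: tabrow_def)
    then have qT: "q \<in> T (1, Suc j)" using rowE[OF sj] by simp
    have "q < p" using col[OF sj qT pT] .
    then have "rk w E q \<le> rk w E k" using p(2) rk_mono[of q k w E] by simp
    then show False using q j jn xy by simp
  qed
  then show "\<exists>y'. y \<le> y' \<and> (x, y') \<in> path_points (P_max n av bv)" using inpts by blast
qed

end



lemma in_some_row:
  assumes "m \<in> pos w s" "count_list w s = As c n"
  shows "\<exists>j\<in>{1..n}. m \<in> tabrow w s c j"
proof -
  have "rk w s m = rk w s (m-1) + 1" using rk_step[OF assms(1)] .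
  then have "0 < rk w s m" by simp
  moreover have "rk w s m \<le> As c n" using rk_le_count[of w s m] assms(2) by simp
  ultimately obtain j where "j\<in>{1..n}" "As c (j-1) < rk w s m" "rk w s m \<le> As c j"
    using find_block by blast
  then show ?thesis using assms(1) by (auto simp: tabrow_def)
qed

lemma tab1: "j \<in> {1..n} \<Longrightarrow> tab n av bv w (1, j) = tabrow w E av j"
  by (simp add: tab_def)
lemma tab2: "j \<in> {1..n} \<Longrightarrow> tab n av bv w (2, j) = tabrow w N bv j"
  by (simp add: tab_def)
lemma tab_out: "\<not> ((i = 1 \<or> i = 2) \<and> j \<in> {1..n}) \<Longrightarrow> tab n av bv w (i, j) = {}"
  by (auto simp: tab_def)

lemma tabrow_pos: "tabrow w s c j \<subseteq> pos w s"
  by (auto simp: tabrow_def)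

lemma path_geD: "path_ge P1 P2 \<Longrightarrow> (x, y) \<in> path_points P2 \<Longrightarrow> \<exists>y'. y \<le> y' \<and> (x, y') \<in> path_points P1"
  unfolding path_ge_def by (drule bspec) auto

lemma in_pp: "(x, y) \<in> path_points P \<longleftrightarrow> (\<exists>k. k \<le> length P \<and> point P k = (x, y))"
  unfolding path_points_def by (auto; metis)

lemma col_word:
  assumes ge: "path_ge (P_max n av bv) w" and j: "j \<in> {1..n}"
    and x: "x \<in> tabrow w E av j" and y: "y \<in> tabrow w N bv j"
  shows "x < y"
proof -
  have yp: "y \<in> pos w N" and yr: "As bv (j-1) < rk w N y" using y by (auto simp: tabrow_def)
  have xp: "x \<in> pos w E" and xr: "rk w E x \<le> As av j" using x by (auto simp: tabrow_def)
  have "y \<le> length w" using yp by (simp add: pos_def)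
  then have "(rk w E y, rk w N y) \<in> path_points w" unfolding in_pp point_rk by blast
  then obtain y' where y': "rk w N y \<le> y'" "(rk w E y, y') \<in> path_points (P_max n av bv)"
    using path_geD[OF ge] by blast
  then obtain k where k: "point (Cb av bv n) k = (rk w E y, y')"
    unfolding in_pp P_max_Cb by blast
  note k = k y'(1)
  then have "count_list (take k (Cb av bv n)) N > As bv (j-1)"
    using yr by (simp add: point_def)
  then have "count_list (take k (Cb av bv n)) E \<ge> As av j"
    using PM_lemma j by auto
  then have "rk w E y \<ge> As av j" using k by (simp add: point_def)
  then have ry: "rk w E x \<le> rk w E y" using xr by simp
  have "x \<noteq> y" using xp yp by (auto simp: pos_def)
  moreover have "\<not> y < x" using rk_strict[OF xp, of y] ry by auto
  ultimately show ?thesis by simp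
qed

lemma tab_svt:
  assumes apos: "\<forall>j\<in>{1..n}. av j > 0" and bpos: "\<forall>j\<in>{1..n}. bv j > 0"
    and wp: "w \<in> paths (As av n) (As bv n)" and ge: "path_ge (P_max n av bv) w"
  shows "tab n av bv w \<in> SVT [n, n] (two_row_density av bv)"
proof -
  let ?T = "tab n av bv w"
  have len: "length w = As av n + As bv n" and cE: "count_list w E = As av n"
    and cN: "count_list w N = As bv n" using wp by (auto simp: paths_def)
  have c1: "\<forall>c. c \<notin> {1::nat,2} \<times> {1..n} \<longrightarrow> ?T c = {}"
    by (auto simp: tab_def)
  have c2: "\<forall>c\<in>{1::nat,2} \<times> {1..n}. finite (?T c) \<and> card (?T c) = two_row_density av bv c"
  proof
    fix c assume c: "c \<in> {1::nat,2} \<times> {1..n}"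
    then obtain i j where ij: "c = (i, j)" "i = 1 \<or> i = 2" "j \<in> {1..n}" by auto
    have f: "finite (?T c)" using finite_subset[OF tabrow_pos] ij by (auto simp: tab_def)
    have "card (?T c) = two_row_density av bv c"
    proof (cases "i = 1")
      case True
      then have "card (?T c) = av j" using ij card_tabrow[of j av w E] As_mono[of j n av] cE
        by (auto simp: tab_def)
      then show ?thesis using True ij by (simp add: two_row_density_def)
    next
      case False
      then have "i = 2" using ij by simp
      then have "card (?T c) = bv j" using ij card_tabrow[of j bv w N] As_mono[of j n bv] cN
        by (auto simp: tab_def)
      then show ?thesis using \<open>i = 2\<close> ij by (simp add: two_row_density_def)
    qed
    then show "finite (?T c) \<and> card (?T c) = two_row_density av bv c" using f by simp
  qed
  have c3: "\<forall>c\<in>{1::nat,2} \<times> {1..n}. \<forall>d\<in>{1::nat,2} \<times> {1..n}. c \<noteq> d \<longrightarrow> ?T c \<inter> ?T d = {}"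
  proof (intro ballI impI)
    fix c d assume c: "c \<in> {1::nat,2} \<times> {1..n}" and d: "d \<in> {1::nat,2} \<times> {1..n}" and cd: "c \<noteq> d"
    obtain i j where ij: "c = (i, j)" "i = 1 \<or> i = 2" "j \<in> {1..n}" using c by auto
    obtain i' j' where ij': "d = (i', j')" "i' = 1 \<or> i' = 2" "j' \<in> {1..n}" using d by auto
    have pd: "pos w E \<inter> pos w N = {}" by (auto simp: pos_def)
    show "?T c \<inter> ?T d = {}"
    proof (cases "i = i'")
      case True
      then have "j \<noteq> j'" using cd ij ij' by simp
      then show ?thesis using ij ij' True tabrow_disj[of j j'] by (auto simp: tab_def)
    next
      case False
      then show ?thesis using ij ij' pd tabrow_pos[of w E av] tabrow_pos[of w N bv]
        by (auto simp: tab_def) blast+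
    qed
  qed
  have c4: "(\<Union>c\<in>{1::nat,2} \<times> {1..n}. ?T c) = {1..As av n + As bv n}"
  proof
    show "(\<Union>c\<in>{1::nat,2} \<times> {1..n}. ?T c) \<subseteq> {1..As av n + As bv n}"
    proof
      fix m assume "m \<in> (\<Union>c\<in>{1::nat,2} \<times> {1..n}. ?T c)"
      then have "m \<in> pos w E \<or> m \<in> pos w N"
        using tabrow_pos[of w E av] tabrow_pos[of w N bv] by (auto simp: tab_def split: if_splits)
      then show "m \<in> {1..As av n + As bv n}" using len by (auto simp: pos_def)
    qed
    show "{1..As av n + As bv n} \<subseteq> (\<Union>c\<in>{1::nat,2} \<times> {1..n}. ?T c)"
    proof
      fix m assume m: "m \<in> {1..As av n + As bv n}"
      show "m \<in> (\<Union>c\<in>{1::nat,2} \<times> {1..n}. ?T c)"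
      proof (cases "w!(m-1)")
        case E
        then have "m \<in> pos w E" using m len by (simp add: pos_def)
        then obtain j where "j\<in>{1..n}" "m \<in> tabrow w E av j" using in_some_row cE by blast
        then show ?thesis by (intro UN_I[of "(1, j)"]) (auto simp: tab_def)
      next
        case N
        then have "m \<in> pos w N" using m len by (simp add: pos_def)
        then obtain j where "j\<in>{1..n}" "m \<in> tabrow w N bv j" using in_some_row cN by blast
        then show ?thesis by (intro UN_I[of "(2, j)"]) (auto simp: tab_def)
      qed
    qed
  qed
  have c5: "\<forall>i j. (i, j) \<in> {1::nat,2} \<times> {1..n} \<longrightarrow>
        ((i, j + 1) \<in> {1::nat,2} \<times> {1..n} \<longrightarrow> (\<forall>x\<in>?T (i, j). \<forall>y\<in>?T (i, j + 1). x < y)) \<and>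
        ((i + 1, j) \<in> {1::nat,2} \<times> {1..n} \<longrightarrow> (\<forall>x\<in>?T (i, j). \<forall>y\<in>?T (i + 1, j). x < y))"
  proof (intro allI impI conjI ballI)
    fix i j x y
    assume ij: "(i, j) \<in> {1::nat,2} \<times> {1..n}" and ij1: "(i, j + 1) \<in> {1::nat,2} \<times> {1..n}"
      and x: "x \<in> ?T (i, j)" and y: "y \<in> ?T (i, j + 1)"
    show "x < y"
    proof (cases "i = 1")
      case True
      then show ?thesis using ij ij1 x y tabrow_row[of x w E av j y] by (auto simp: tab_def)
    next
      case False
      then have "i = 2" using ij by auto
      then show ?thesis using ij ij1 x y tabrow_row[of x w N bv j y] by (auto simp: tab_def)
    qed
  next
    fix i j x y
    assume ij: "(i, j) \<in> {1::nat,2} \<times> {1..n}" and ij1: "(i + 1, j) \<in> {1::nat,2} \<times> {1..n}"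
      and x: "x \<in> ?T (i, j)" and y: "y \<in> ?T (i + 1, j)"
    have i1: "i = 1" and j: "j \<in> {1..n}" using ij ij1 by auto
    then have "x \<in> tabrow w E av j" "y \<in> tabrow w N bv j" using x y by (auto simp: tab_def)
    then show "x < y" using col_word[OF ge j] by blast
  qed
  show ?thesis unfolding SVT_def cells_nn density_nn using c1 c2 c3 c4 c5 by blast
qed

lemma psi_tab:
  assumes wp: "w \<in> paths (As av n) (As bv n)"
  shows "psi (As av n + As bv n) (tab n av bv w) = w"
proof -
  let ?L = "As av n + As bv n"
  have len: "length w = ?L" and cE: "count_list w E = As av n"
    using wp by (auto simp: paths_def)
  show ?thesis
  proof (rule nth_equalityI)
    show "length (psi ?L (tab n av bv w)) = length w" using len by (simp add: psi_def del: upt_Suc)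
    fix i assume "i < length (psi ?L (tab n av bv w))"
    then have i: "i < ?L" by (simp add: psi_def del: upt_Suc)
    have "[1..<?L+1] ! i = Suc i" using i by (simp del: upt_Suc)
    then have ps: "psi ?L (tab n av bv w) ! i = (if \<exists>j. Suc i \<in> tab n av bv w (1, j) then E else N)"
      using i by (simp add: psi_def del: upt_Suc)
    show "psi ?L (tab n av bv w) ! i = w ! i"
    proof (cases "w ! i")
      case E
      then have "Suc i \<in> pos w E" using i len by (simp add: pos_def)
      then obtain j where "j\<in>{1..n}" "Suc i \<in> tabrow w E av j" using in_some_row cE by blast
      then have "\<exists>j. Suc i \<in> tab n av bv w (1, j)" using tab1 by blast
      then show ?thesis using ps E by simp
    next
      case N
      have "\<not> (\<exists>j. Suc i \<in> tab n av bv w (1, j))"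
      proof
        assume "\<exists>j. Suc i \<in> tab n av bv w (1, j)"
        then obtain j where "Suc i \<in> tab n av bv w (1, j)" by blast
        then have "Suc i \<in> pos w E" using tabrow_pos by (auto simp: tab_def split: if_splits) blast+
        then show False using N by (simp add: pos_def)
      qed
      then show ?thesis using ps N by simp
    qed
  qed
qed

theorem theorem9:
  fixes n :: nat and av bv :: "nat \<Rightarrow> nat"
  assumes "n \<ge> 1"
    and "\<forall>j\<in>{1..n}. av j > 0"
    and "\<forall>j\<in>{1..n}. bv j > 0"
  defines "a \<equiv> (\<Sum>j=1..n. av j)" and "b \<equiv> (\<Sum>j=1..n. bv j)"
  defines "I \<equiv> {P\<in>paths a b. path_ge (P_max n av bv) P}"
  shows "inj_on (psi (a + b)) (SVT [n, n] (two_row_density av bv))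
       \<and> psi (a + b) ` SVT [n, n] (two_row_density av bv) = I
       \<and> bij_betw (psi (a + b)) (SVT [n, n] (two_row_density av bv)) I"
proof -
  have ab: "a = As av n" "b = As bv n" unfolding a_def b_def As_def by simp_all
  have inj: "inj_on (psi (a + b)) (SVT [n, n] (two_row_density av bv))"
  proof (rule inj_onI)
    fix T1 T2 assume t1: "T1 \<in> SVT [n, n] (two_row_density av bv)"
      and t2: "T2 \<in> SVT [n, n] (two_row_density av bv)" and eq: "psi (a + b) T1 = psi (a + b) T2"
    interpret s1: svt n av bv T1 using t1 assms(2,3) by unfold_locales
    interpret s2: svt n av bv T2 using t2 assms(2,3) by unfold_locales
    have w1: "s1.w = psi (a + b) T1" by (simp only: s1.w_def ab)
    have w2: "s2.w = psi (a + b) T2" by (simp only: s2.w_def ab)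
    have ww: "s1.w = s2.w" using w1 w2 eq by simp
    have "T1 = tab n av bv s1.w" using s1.tab_eq by simp
    also have "\<dots> = tab n av bv s2.w" using ww by simp
    also have "\<dots> = T2" using s2.tab_eq .
    finally show "T1 = T2" .
  qed
  have img: "psi (a + b) ` SVT [n, n] (two_row_density av bv) = I"
  proof
    show "psi (a + b) ` SVT [n, n] (two_row_density av bv) \<subseteq> I"
    proof
      fix P assume "P \<in> psi (a + b) ` SVT [n, n] (two_row_density av bv)"
      then obtain T where t: "T \<in> SVT [n, n] (two_row_density av bv)" "P = psi (a + b) T" by blast
      interpret s: svt n av bv T using t(1) assms(2,3) by unfold_locales
      have "P = s.w" using t(2) ab by (simp add: s.w_def)
      then show "P \<in> I" using s.w_paths s.w_ge ab by (simp add: I_def)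
    qed
    show "I \<subseteq> psi (a + b) ` SVT [n, n] (two_row_density av bv)"
    proof
      fix P assume "P \<in> I"
      then have p: "P \<in> paths (As av n) (As bv n)" "path_ge (P_max n av bv) P"
        using ab by (auto simp: I_def)
      have "tab n av bv P \<in> SVT [n, n] (two_row_density av bv)"
        using tab_svt[OF assms(2,3) p] .
      moreover have "psi (a + b) (tab n av bv P) = P" using psi_tab[OF p(1)] ab by simp
      ultimately show "P \<in> psi (a + b) ` SVT [n, n] (two_row_density av bv)" by (intro image_eqI[of P "psi (a + b)" "tab n av bv P"]) simp_all
    qed
  qed
  show ?thesis using inj img by (simp add: bij_betw_def)
qed


end
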